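(* Let $\rho_{Q^n}$ be an arbitrary normalized state on $Q^{\otimes n}$ and let $\{P,I-P\}$ be a two-outcome POVM on $Q$ with $\|P\|_\infty\le\delta$. Let $\boldsymbol N_P$ be the number of $P$-outcomes when each subsystem of $\rho_{Q^n}$ is measured with $\{P,I-P\}$. Then $$\Pr\Big(\frac{\boldsymbol N_P}{n}\ge\delta+c\Big)\le\sum_{i=n(\delta+c)}^{n}\binom ni\delta^i(1-\delta)^{n-i}$$ (sum over integers $i$ with $n(\delta+c)\le i\le n$). *)

theory Defs
  imports Complex_Main
begin

text \<open>Q is a Hilbert space of dimension d (basis indices 0..<d).  Q^{\<otimes>n} has the
  product basis indexed by lists of length n with entries < d.  Operators are
  represented by their matrix entries w.r.t. these bases.\<close>

definition idx :: "nat \<Rightarrow> nat \<Rightarrow> nat list set" where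
  "idx d n = {xs. length xs = n \<and> set xs \<subseteq> {..<d}}"

definition psd_on :: "'i set \<Rightarrow> ('i \<Rightarrow> 'i \<Rightarrow> complex) \<Rightarrow> bool" where
  "psd_on S A \<longleftrightarrow> (\<forall>v :: 'i \<Rightarrow> complex.
      Im (\<Sum>i\<in>S. \<Sum>j\<in>S. cnj (v i) * A i j * v j) = 0 \<and>
      0 \<le> Re (\<Sum>i\<in>S. \<Sum>j\<in>S. cnj (v i) * A i j * v j))"

definition density_op :: "'i set \<Rightarrow> ('i \<Rightarrow> 'i \<Rightarrow> complex) \<Rightarrow> bool" where
  "density_op S \<rho> \<longleftrightarrow> psd_on S \<rho> \<and> (\<Sum>i\<in>S. \<rho> i i) = 1"

definition id_op :: "nat \<Rightarrow> nat \<Rightarrow> complex" where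
  "id_op i j = (if i = j then 1 else 0)"

definition two_povm :: "nat \<Rightarrow> (nat \<Rightarrow> nat \<Rightarrow> complex) \<Rightarrow> bool" where
  "two_povm d P \<longleftrightarrow> psd_on {..<d} P \<and> psd_on {..<d} (\<lambda>i j. id_op i j - P i j)"

definition vec_norm :: "nat \<Rightarrow> (nat \<Rightarrow> complex) \<Rightarrow> real" where
  "vec_norm d v = sqrt (\<Sum>i<d. (cmod (v i))\<^sup>2)"

definition mat_app :: "nat \<Rightarrow> (nat \<Rightarrow> nat \<Rightarrow> complex) \<Rightarrow> (nat \<Rightarrow> complex) \<Rightarrow> nat \<Rightarrow> complex" where
  "mat_app d A v = (\<lambda>i. \<Sum>j<d. A i j * v j)"

definition op_norm :: "nat \<Rightarrow> (nat \<Rightarrow> nat \<Rightarrow> complex) \<Rightarrow> real" where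
  "op_norm d A = Sup {vec_norm d (mat_app d A v) | v. vec_norm d v = 1}"

definition outcome_op :: "(nat \<Rightarrow> nat \<Rightarrow> complex) \<Rightarrow> bool \<Rightarrow> nat \<Rightarrow> nat \<Rightarrow> complex" where
  "outcome_op P b = (if b then P else (\<lambda>i j. id_op i j - P i j))"

text \<open>Probability of outcome string x (length n) when each subsystem is measured:
  tr(\<rho> (M_{x_1} \<otimes> ... \<otimes> M_{x_n})).\<close>
definition outcome_prob :: "nat \<Rightarrow> nat \<Rightarrow> (nat list \<Rightarrow> nat list \<Rightarrow> complex)
    \<Rightarrow> (nat \<Rightarrow> nat \<Rightarrow> complex) \<Rightarrow> bool list \<Rightarrow> real" where
  "outcome_prob d n \<rho> P x =
     Re (\<Sum>i\<in>idx d n. \<Sum>j\<in>idx d n.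
           \<rho> i j * (\<Prod>k<n. outcome_op P (x ! k) (j ! k) (i ! k)))"

definition outcome_strings :: "nat \<Rightarrow> bool list set" where
  "outcome_strings n = {x. length x = n}"

definition num_P :: "bool list \<Rightarrow> nat" where
  "num_P x = length (filter id x)"

definition prob_event :: "nat \<Rightarrow> nat \<Rightarrow> (nat list \<Rightarrow> nat list \<Rightarrow> complex)
    \<Rightarrow> (nat \<Rightarrow> nat \<Rightarrow> complex) \<Rightarrow> (bool list \<Rightarrow> bool) \<Rightarrow> real" where
  "prob_event d n \<rho> P E = (\<Sum>x\<in>{x \<in> outcome_strings n. E x}. outcome_prob d n \<rho> P x)"

end

theory Submission
  imports Defs "HOL-Analysis.L2_Norm"
begin

definition qf :: "'i set \<Rightarrow> ('i \<Rightarrow> 'i \<Rightarrow> complex) \<Rightarrow> ('i \<Rightarrow> complex) \<Rightarrow> complex" where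
  "qf S A v = (\<Sum>i\<in>S. \<Sum>j\<in>S. cnj (v i) * A i j * v j)"

lemma psd_on_qf: "psd_on S A \<longleftrightarrow> (\<forall>v. Im (qf S A v) = 0 \<and> 0 \<le> Re (qf S A v))"
  unfolding psd_on_def qf_def by simp

lemma psd_onD:
  assumes "psd_on S A" shows "Im (qf S A v) = 0" "0 \<le> Re (qf S A v)"
  using assms unfolding psd_on_qf by auto

lemma qf_subset:
  assumes "finite S" "T \<subseteq> S" "\<And>k. k \<in> S - T \<Longrightarrow> v k = 0"
  shows "qf S A v = qf T A v"
proof -
  have "qf S A v = (\<Sum>i\<in>T. \<Sum>j\<in>S. cnj (v i) * A i j * v j)"
    unfolding qf_def by (rule sum.mono_neutral_right) (use assms in auto)
  also have "\<dots> = qf T A v"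
    unfolding qf_def
    by (rule sum.cong[OF refl], rule sum.mono_neutral_right) (use assms in auto)
  finally show ?thesis .
qed

lemma qf_two:
  assumes "finite S" "i \<in> S" "j \<in> S" "i \<noteq> j"
  shows "qf S A (\<lambda>k. if k = i then a else if k = j then b else 0)
    = cnj a * A i i * a + cnj a * A i j * b + cnj b * A j i * a + cnj b * A j j * b"
  apply (subst qf_subset[where T="{i,j}"]) using assms apply auto[3]
  using assms by (simp add: qf_def algebra_simps)

lemma qf_one:
  assumes "finite S" "i \<in> S"
  shows "qf S A (\<lambda>k. if k = i then a else 0) = cnj a * A i i * a"
  apply (subst qf_subset[where T="{i}"]) using assms apply auto[3]
  using assms by (simp add: qf_def algebra_simps)

lemma psd_diag:
  assumes "psd_on S A" "finite S" "i \<in> S"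
  shows "Im (A i i) = 0" "0 \<le> Re (A i i)"
  using psd_onD[OF assms(1), of "\<lambda>k. if k = i then 1 else 0"] qf_one[OF assms(2,3), of A 1] by auto

lemma psd_herm:
  assumes "psd_on S A" "finite S" "i \<in> S" "j \<in> S"
  shows "A j i = cnj (A i j)"
proof (cases "i = j")
  case True
  then show ?thesis using psd_diag[OF assms(1-3)] by (simp add: complex_eq_iff)
next
  case False
  have d: "Im (A i i) = 0" "Im (A j j) = 0"
    using psd_diag(1)[OF assms(1,2,3)] psd_diag(1)[OF assms(1,2,4)] by auto
  have 1: "Im (qf S A (\<lambda>k. if k = i then 1 else if k = j then 1 else 0)) = 0"
    by (rule psd_onD[OF assms(1)])
  have 2: "Im (qf S A (\<lambda>k. if k = i then 1 else if k = j then \<i> else 0)) = 0"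
    by (rule psd_onD[OF assms(1)])
  have e1: "Im (A i j) + Im (A j i) = 0"
    using 1 d unfolding qf_two[OF assms(2-4) False] by simp
  have e2: "Re (A i j) - Re (A j i) = 0"
    using 2 d unfolding qf_two[OF assms(2-4) False] by simp
  show ?thesis using e1 e2 by (simp add: complex_eq_iff)
qed

lemma sum_delta_mult:
  fixes f :: "'a \<Rightarrow> complex"
  assumes "finite S"
  shows "(\<Sum>j\<in>S. f j * (if j = s then c else 0)) = (if s \<in> S then f s * c else 0)"
proof -
  have "(\<Sum>j\<in>S. f j * (if j = s then c else 0)) = (\<Sum>j\<in>S. if j = s then f s * c else 0)" by (rule sum.cong) auto
  then show ?thesis using assms by simp
qed

lemma sum_delta_mult':
  fixes f :: "'a \<Rightarrow> complex"
  assumes "finite S"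
  shows "(\<Sum>j\<in>S. (if j = s then c else 0) * f j) = (if s \<in> S then c * f s else 0)"
proof -
  have "(\<Sum>j\<in>S. (if j = s then c else 0) * f j) = (\<Sum>j\<in>S. if j = s then c * f s else 0)" by (rule sum.cong) auto
  then show ?thesis using assms by simp
qed

lemma qf_cong: "(\<And>k. k \<in> S \<Longrightarrow> v k = w k) \<Longrightarrow> qf S A v = qf S A w"
  unfolding qf_def by (intro sum.cong refl) auto

lemma psd_zero_row:
  assumes "psd_on S A" "finite S" "i \<in> S" "j \<in> S" "A i i = 0"
  shows "A i j = 0"
proof (rule ccontr)
  assume nz: "A i j \<noteq> 0"
  then have ij: "i \<noteq> j" using assms by auto
  define z where "z = A i j"
  have h: "A j i = cnj z" using psd_herm[OF assms(1,2,3,4)] z_def by simp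
  define q where "q = Re z ^ 2 + Im z ^ 2"
  have q: "q > 0" using nz unfolding z_def q_def
    by (simp add: complex_eq_iff sum_power2_gt_zero_iff)
  define t where "t = (Re (A j j) + 1) / (2 * q)"
  define a where "a = - (complex_of_real t * z)"
  have "0 \<le> Re (qf S A (\<lambda>k. if k = i then a else if k = j then 1 else 0))"
    by (rule psd_onD[OF assms(1)])
  also have "Re (qf S A (\<lambda>k. if k = i then a else if k = j then 1 else 0)) = Re (A j j) - 2 * t * q"
    unfolding qf_two[OF assms(2,3,4) ij] using assms(5) h
    by (simp add: a_def z_def[symmetric] q_def algebra_simps power2_eq_square)
  also have "\<dots> = -1" using q unfolding t_def by (simp add: field_simps)
  finally show False by simp
qed

lemma psd_restrict:
  assumes "psd_on T A" "S \<subseteq> T" "finite T"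
  shows "psd_on S A"
  unfolding psd_on_qf
proof
  fix v
  have "qf S A v = qf T A (\<lambda>k. if k \<in> S then v k else 0)"
  proof -
    have "qf S A v = qf S A (\<lambda>k. if k \<in> S then v k else 0)" by (rule qf_cong) auto
    also have "\<dots> = qf T A (\<lambda>k. if k \<in> S then v k else 0)"
      by (rule qf_subset[OF assms(3,2), symmetric]) auto
    finally show ?thesis .
  qed
  then show "Im (qf S A v) = 0 \<and> 0 \<le> Re (qf S A v)" using psd_onD[OF assms(1)] by simp
qed

lemma qf_shift:
  assumes "finite S" "s \<in> S"
  shows "qf S A (\<lambda>k. v k + (if k = s then \<tau> else 0)) = qf S A v
     + \<tau> * (\<Sum>i\<in>S. cnj (v i) * A i s) + cnj \<tau> * (\<Sum>j\<in>S. A s j * v j) + cnj \<tau> * A s s * \<tau>"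
proof -
  define e where "e = (\<lambda>k. if k = s then \<tau> else 0)"
  have "qf S A (\<lambda>k. v k + e k) = (\<Sum>i\<in>S. \<Sum>j\<in>S. cnj (v i) * A i j * v j + cnj (v i) * A i j * e j
       + cnj (e i) * A i j * v j + cnj (e i) * A i j * e j)"
    unfolding qf_def by (intro sum.cong refl) (simp add: algebra_simps)
  also have "\<dots> = qf S A v + (\<Sum>i\<in>S. \<Sum>j\<in>S. cnj (v i) * A i j * e j)
      + (\<Sum>i\<in>S. \<Sum>j\<in>S. cnj (e i) * A i j * v j) + (\<Sum>i\<in>S. \<Sum>j\<in>S. cnj (e i) * A i j * e j)"
    unfolding qf_def by (simp add: sum.distrib)
  also have "(\<Sum>i\<in>S. \<Sum>j\<in>S. cnj (v i) * A i j * e j) = \<tau> * (\<Sum>i\<in>S. cnj (v i) * A i s)"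
    unfolding e_def using assms by (simp add: sum_distrib_left mult_ac if_distrib cong: if_cong)
  also have "(\<Sum>i\<in>S. \<Sum>j\<in>S. cnj (e i) * A i j * v j) = (\<Sum>i\<in>S. if i = s then cnj \<tau> * (\<Sum>j\<in>S. A s j * v j) else 0)"
    by (intro sum.cong refl) (auto simp: e_def sum_distrib_left mult_ac)
  also have "\<dots> = cnj \<tau> * (\<Sum>j\<in>S. A s j * v j)" using assms by simp
  also have "(\<Sum>i\<in>S. \<Sum>j\<in>S. cnj (e i) * A i j * e j) = (\<Sum>i\<in>S. if i = s then cnj \<tau> * A s s * \<tau> else 0)"
    by (intro sum.cong refl) (use assms in \<open>auto simp: e_def sum_delta_mult\<close>)
  also have "\<dots> = cnj \<tau> * A s s * \<tau>" using assms by simp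
  finally show ?thesis unfolding e_def .
qed

lemma schur_psd:
  assumes B: "psd_on S B" and fin: "finite S" and s: "s \<in> S" and r: "Re (B s s) > 0"
  shows "psd_on S (\<lambda>i j. B i j - B i s * B s j / complex_of_real (Re (B s s)))"
  unfolding psd_on_qf
proof
  fix v
  define r where "r = Re (B s s)"
  define R where "R = complex_of_real r"
  have R0: "R \<noteq> 0" using r unfolding R_def r_def by simp
  have Bss: "B s s = R" using psd_diag(1)[OF B fin s] unfolding R_def r_def by (simp add: complex_eq_iff)
  have cR: "cnj R = R" unfolding R_def by simp
  define \<beta> where "\<beta> = (\<Sum>j\<in>S. B s j * v j)"
  define \<gamma> where "\<gamma> = (\<Sum>i\<in>S. cnj (v i) * B i s)"
  have g: "\<gamma> = cnj \<beta>" unfolding \<gamma>_def \<beta>_def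
    by (simp add: psd_herm[OF B fin s] mult.commute)
  have "qf S (\<lambda>i j. B i j - B i s * B s j / complex_of_real (Re (B s s))) v
      = (\<Sum>i\<in>S. \<Sum>j\<in>S. cnj (v i) * B i j * v j - (cnj (v i) * B i s) * (B s j * v j) / R)"
    unfolding qf_def r_def[symmetric] R_def[symmetric]
    by (intro sum.cong refl) (simp add: algebra_simps)
  also have "\<dots> = qf S B v - \<gamma> * \<beta> / R"
    unfolding qf_def \<gamma>_def \<beta>_def
    by (simp add: sum_subtractf sum_divide_distrib sum_product)
  also have "\<dots> = qf S B (\<lambda>k. v k + (if k = s then - \<beta> / R else 0))"
    unfolding qf_shift[OF fin s] \<gamma>_def[symmetric] \<beta>_def[symmetric] Bss g
    using R0 cR by (simp add: field_simps)
  finally have eq: "qf S (\<lambda>i j. B i j - B i s * B s j / complex_of_real (Re (B s s))) v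
     = qf S B (\<lambda>k. v k + (if k = s then - \<beta> / R else 0))" .
  show "Im (qf S (\<lambda>i j. B i j - B i s * B s j / complex_of_real (Re (B s s))) v) = 0 \<and>
         0 \<le> Re (qf S (\<lambda>i j. B i j - B i s * B s j / complex_of_real (Re (B s s))) v)"
    unfolding eq using psd_onD[OF B] by simp
qed

lemma psd_ext_zero:
  assumes C: "psd_on (insert s S) C" and fin: "finite S" and sS: "s \<notin> S" and Css: "C s s = 0"
    and IH: "\<And>B. psd_on S B \<Longrightarrow> \<exists>(m::nat) U. \<forall>i\<in>S. \<forall>j\<in>S. B i j = (\<Sum>k<m. U k i * cnj (U k j))"
  shows "\<exists>(m::nat) U. \<forall>i\<in>insert s S. \<forall>j\<in>insert s S. C i j = (\<Sum>k<m. U k i * cnj (U k j))"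
proof -
  have fin': "finite (insert s S)" using fin by simp
  have "psd_on S C" by (rule psd_restrict[OF C _ fin']) auto
  from IH[OF this] obtain m :: nat and U where U: "\<forall>i\<in>S. \<forall>j\<in>S. C i j = (\<Sum>k<m. U k i * cnj (U k j))"
    by blast
  define U' where "U' = (\<lambda>k i. if i = s then 0 else U k i)"
  have row: "C s j = 0" if "j \<in> insert s S" for j
    using psd_zero_row[OF C fin' _ that Css] by simp
  have col: "C i s = 0" if "i \<in> insert s S" for i
    using psd_herm[OF C fin' _ that] row[OF that] by simp
  show ?thesis
  proof (intro exI[of _ m] exI[of _ U'] ballI)
    fix i j assume i: "i \<in> insert s S" and j: "j \<in> insert s S"
    show "C i j = (\<Sum>k<m. U' k i * cnj (U' k j))"
    proof (cases "i = s \<or> j = s")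
      case True
      then show ?thesis using row col i j unfolding U'_def by auto
    next
      case False
      then show ?thesis using U i j unfolding U'_def by auto
    qed
  qed
qed

lemma psd_decomp:
  "finite S \<Longrightarrow> psd_on S B \<Longrightarrow> \<exists>(m::nat) U. \<forall>i\<in>S. \<forall>j\<in>S. B i j = (\<Sum>k<m. U k i * cnj (U k j))"
proof (induction S arbitrary: B rule: finite_induct)
  case empty
  then show ?case by auto
next
  case (insert s S)
  have fin': "finite (insert s S)" using insert by simp
  have s: "s \<in> insert s S" by simp
  have B: "psd_on (insert s S) B" by fact
  show ?case
  proof (cases "Re (B s s) = 0")
    case True
    then have "B s s = 0" using psd_diag(1)[OF B fin' s] by (simp add: complex_eq_iff)
    then show ?thesis by (rule psd_ext_zero[OF B insert(1,2) _ insert(3)])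
  next
    case False
    define r where "r = Re (B s s)"
    have r: "r > 0" using False psd_diag(2)[OF B fin' s] unfolding r_def by simp
    define B' where "B' = (\<lambda>i j. B i j - B i s * B s j / complex_of_real (Re (B s s)))"
    have B': "psd_on (insert s S) B'" unfolding B'_def
      by (rule schur_psd[OF B fin' s]) (use r in \<open>simp add: r_def\<close>)
    have Bss: "B s s = complex_of_real r" using psd_diag(1)[OF B fin' s] unfolding r_def
      by (simp add: complex_eq_iff)
    have "B' s s = 0" unfolding B'_def Bss using r by simp
    from psd_ext_zero[OF B' insert(1,2) this insert(3)]
    obtain m :: nat and U where U: "\<forall>i\<in>insert s S. \<forall>j\<in>insert s S. B' i j = (\<Sum>k<m. U k i * cnj (U k j))"
      by blast
    define b where "b = (\<lambda>i. B i s / complex_of_real (sqrt r))"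
    define U' where "U' = (\<lambda>k. if k = m then b else U k)"
    show ?thesis
    proof (intro exI[of _ "Suc m"] exI[of _ U'] ballI)
      fix i j assume i: "i \<in> insert s S" and j: "j \<in> insert s S"
      have "(\<Sum>k<Suc m. U' k i * cnj (U' k j)) = (\<Sum>k<m. U k i * cnj (U k j)) + b i * cnj (b j)"
        unfolding U'_def by simp
      also have "\<dots> = B' i j + b i * cnj (b j)" using bspec[OF bspec[OF U i] j] by simp
      also have "b i * cnj (b j) = B i s * B s j / complex_of_real r"
      proof -
        have h: "cnj (B j s) = B s j" using psd_herm[OF B fin' s j] by simp
        have "complex_of_real (sqrt r) * complex_of_real (sqrt r) = complex_of_real r"
          unfolding of_real_mult[symmetric] using r by simp
        then show ?thesis unfolding b_def using h by (simp add: field_simps)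
      qed
      finally show "B i j = (\<Sum>k<Suc m. U' k i * cnj (U' k j))"
        unfolding B'_def r_def by simp
    qed
  qed
qed

lemma psd_trace_prod:
  assumes fin: "finite S" and A: "psd_on S A" and B: "psd_on S B"
  shows "Im (\<Sum>i\<in>S. \<Sum>j\<in>S. A i j * B j i) = 0" "0 \<le> Re (\<Sum>i\<in>S. \<Sum>j\<in>S. A i j * B j i)"
proof -
  obtain m :: nat and U where U: "\<forall>i\<in>S. \<forall>j\<in>S. B i j = (\<Sum>k<m. U k i * cnj (U k j))"
    using psd_decomp[OF fin B] by blast
  have "(\<Sum>i\<in>S. \<Sum>j\<in>S. A i j * B j i) = (\<Sum>i\<in>S. \<Sum>j\<in>S. \<Sum>k<m. cnj (U k i) * A i j * U k j)"
    using U by (intro sum.cong refl) (simp add: sum_distrib_left mult_ac)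
  also have "\<dots> = (\<Sum>i\<in>S. \<Sum>k<m. \<Sum>j\<in>S. cnj (U k i) * A i j * U k j)"
    by (intro sum.cong refl) (rule sum.swap)
  also have "\<dots> = (\<Sum>k<m. \<Sum>i\<in>S. \<Sum>j\<in>S. cnj (U k i) * A i j * U k j)"
    by (rule sum.swap)
  also have "\<dots> = (\<Sum>k<m. qf S A (U k))" unfolding qf_def by simp
  finally have eq: "(\<Sum>i\<in>S. \<Sum>j\<in>S. A i j * B j i) = (\<Sum>k<m. qf S A (U k))" .
  show "Im (\<Sum>i\<in>S. \<Sum>j\<in>S. A i j * B j i) = 0" unfolding eq Im_sum
    using psd_onD(1)[OF A] by simp
  show "0 \<le> Re (\<Sum>i\<in>S. \<Sum>j\<in>S. A i j * B j i)" unfolding eq Re_sum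
    using psd_onD(2)[OF A] by (simp add: sum_nonneg)
qed

lemma vec_norm_L2: "vec_norm d v = L2_set (\<lambda>i. cmod (v i)) {..<d}"
  unfolding vec_norm_def L2_set_def by simp

lemma mat_app_bound:
  assumes "vec_norm d v = 1" "i < d"
  shows "cmod (mat_app d A v i) \<le> (\<Sum>j<d. cmod (A i j))"
proof -
  have "cmod (mat_app d A v i) \<le> (\<Sum>j<d. cmod (A i j * v j))"
    unfolding mat_app_def by (rule norm_sum)
  also have "\<dots> \<le> (\<Sum>j<d. cmod (A i j))"
  proof (rule sum_mono)
    fix j assume j: "j \<in> {..<d}"
    have "cmod (v j) \<le> 1" using member_le_L2_set[of "{..<d}" j "\<lambda>i. cmod (v i)"] j assms(1)
      unfolding vec_norm_L2 by simp
    then show "cmod (A i j * v j) \<le> cmod (A i j)"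
      by (simp add: norm_mult mult_left_le)
  qed
  finally show ?thesis .
qed

lemma op_norm_bdd: "bdd_above {vec_norm d (mat_app d A v) | v. vec_norm d v = 1}"
proof (rule bdd_aboveI)
  fix x assume "x \<in> {vec_norm d (mat_app d A v) | v. vec_norm d v = 1}"
  then obtain v where v: "vec_norm d v = 1" and x: "x = vec_norm d (mat_app d A v)" by blast
  have "x \<le> (\<Sum>i<d. cmod (mat_app d A v i))"
    unfolding x vec_norm_L2 by (rule L2_set_le_sum) simp
  also have "\<dots> \<le> (\<Sum>i<d. \<Sum>j<d. cmod (A i j))"
    by (rule sum_mono) (use mat_app_bound[OF v] in auto)
  finally show "x \<le> (\<Sum>i<d. \<Sum>j<d. cmod (A i j))" .
qed

lemma op_norm_le:
  "vec_norm d (mat_app d A v) \<le> op_norm d A * vec_norm d v"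
proof (cases "vec_norm d v = 0")
  case True
  then have "\<forall>i\<in>{..<d}. cmod (v i) = 0" unfolding vec_norm_L2 using L2_set_eq_0_iff[of "{..<d}" "\<lambda>i. cmod (v i)"] by simp
  then have "\<forall>i\<in>{..<d}. cmod (mat_app d A v i) = 0" unfolding mat_app_def by simp
  then have "vec_norm d (mat_app d A v) = 0" unfolding vec_norm_L2 using L2_set_eq_0_iff[of "{..<d}" "\<lambda>i. cmod (mat_app d A v i)"] by simp
  then show ?thesis using True by simp
next
  case False
  define N where "N = vec_norm d v"
  have "N \<ge> 0" unfolding N_def vec_norm_L2 by simp
  then have N: "N > 0" using False unfolding N_def by simp
  define u where "u = (\<lambda>i. v i / complex_of_real N)"
  have scale: "vec_norm d (\<lambda>i. w i / complex_of_real N) = vec_norm d w / N" for w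
  proof -
    have "vec_norm d (\<lambda>i. w i / complex_of_real N) = L2_set (\<lambda>i. (1/N) * cmod (w i)) {..<d}"
      unfolding vec_norm_L2 using N by (intro L2_set_cong) (auto simp: norm_divide)
    also have "\<dots> = (1/N) * vec_norm d w" unfolding vec_norm_L2
      by (rule L2_set_right_distrib[symmetric]) (use N in simp)
    finally show ?thesis by simp
  qed
  have u1: "vec_norm d u = 1" unfolding u_def scale N_def[symmetric] using N by simp
  have mu: "mat_app d A u = (\<lambda>i. mat_app d A v i / complex_of_real N)"
    unfolding mat_app_def u_def by (simp add: sum_divide_distrib)
  have "vec_norm d (mat_app d A u) \<le> op_norm d A"
    unfolding op_norm_def by (rule cSup_upper[OF _ op_norm_bdd]) (use u1 in blast)
  then have "vec_norm d (mat_app d A v) / N \<le> op_norm d A" unfolding mu scale .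
  then show ?thesis using N unfolding N_def[symmetric] by (simp add: field_simps)
qed

lemma qf_mat_app: "qf {..<d} A v = (\<Sum>i<d. cnj (v i) * mat_app d A v i)"
  unfolding qf_def mat_app_def by (simp add: sum_distrib_left mult.assoc)

lemma qf_le_norm:
  "Re (qf {..<d} A v) \<le> op_norm d A * (vec_norm d v)^2"
proof -
  have "Re (qf {..<d} A v) \<le> cmod (qf {..<d} A v)" by (rule complex_Re_le_cmod)
  also have "\<dots> \<le> (\<Sum>i<d. cmod (cnj (v i) * mat_app d A v i))"
    unfolding qf_mat_app by (rule norm_sum)
  also have "\<dots> = (\<Sum>i<d. \<bar>cmod (v i)\<bar> * \<bar>cmod (mat_app d A v i)\<bar>)"
    by (simp add: norm_mult)
  also have "\<dots> \<le> vec_norm d v * vec_norm d (mat_app d A v)"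
    unfolding vec_norm_L2 by (rule L2_set_mult_ineq)
  also have "\<dots> \<le> vec_norm d v * (op_norm d A * vec_norm d v)"
    by (rule mult_left_mono[OF op_norm_le]) (simp add: vec_norm_L2)
  finally show ?thesis by (simp add: power2_eq_square mult_ac)
qed

lemma cnj_sum_sq: "(\<Sum>i<d. cnj (v i) * v i) = complex_of_real ((vec_norm d v)^2)"
proof -
  have "(vec_norm d v)^2 = (\<Sum>i<d. (cmod (v i))^2)"
    unfolding vec_norm_def by (simp add: sum_nonneg)
  moreover have "cnj (v i) * v i = complex_of_real ((cmod (v i))^2)" for i
  proof -
    have "cnj (v i) * v i = v i * cnj (v i)" by (rule mult.commute)
    also have "\<dots> = complex_of_real ((cmod (v i))^2)" by (rule complex_norm_square[symmetric])
    finally show ?thesis .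
  qed
  ultimately show ?thesis by simp
qed

lemma qf_shiftid:
  "qf {..<d} (\<lambda>i j. complex_of_real \<delta> * id_op i j - A i j) v
    = complex_of_real \<delta> * complex_of_real ((vec_norm d v)^2) - qf {..<d} A v"
proof -
  have "qf {..<d} (\<lambda>i j. complex_of_real \<delta> * id_op i j - A i j) v
     = (\<Sum>i<d. \<Sum>j<d. complex_of_real \<delta> * ((if j = i then 1 else 0) * (cnj (v i) * v j)) - cnj (v i) * A i j * v j)"
    unfolding qf_def id_op_def by (intro sum.cong refl) (auto simp: algebra_simps)
  also have "\<dots> = complex_of_real \<delta> * (\<Sum>i<d. cnj (v i) * v i) - qf {..<d} A v"
    unfolding qf_def by (simp add: sum_subtractf sum_distrib_left[symmetric] sum_delta_mult')
  finally show ?thesis unfolding cnj_sum_sq .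
qed

lemma psd_delta_minus:
  assumes P: "psd_on {..<d} P" and n: "op_norm d P \<le> \<delta>"
  shows "psd_on {..<d} (\<lambda>i j. complex_of_real \<delta> * id_op i j - P i j)"
  unfolding psd_on_qf qf_shiftid
proof
  fix v
  have "Re (qf {..<d} P v) \<le> op_norm d P * (vec_norm d v)^2" by (rule qf_le_norm)
  also have "\<dots> \<le> \<delta> * (vec_norm d v)^2" by (rule mult_right_mono[OF n]) simp
  finally show "Im (complex_of_real \<delta> * complex_of_real ((vec_norm d v)\<^sup>2) - qf {..<d} P v) = 0 \<and>
         0 \<le> Re (complex_of_real \<delta> * complex_of_real ((vec_norm d v)\<^sup>2) - qf {..<d} P v)"
    using psd_onD(1)[OF P, of v] by simp
qed

definition contr :: "nat \<Rightarrow> (nat list \<Rightarrow> nat list \<Rightarrow> complex) \<Rightarrow> (nat \<Rightarrow> nat \<Rightarrow> complex) \<Rightarrow> nat list \<Rightarrow> nat list \<Rightarrow> complex" where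
  "contr d \<rho> M i j = (\<Sum>a<d. \<Sum>a'<d. \<rho> (a#i) (a'#j) * M a' a)"

definition Rv :: "nat \<Rightarrow> nat \<Rightarrow> (nat list \<Rightarrow> nat list \<Rightarrow> complex) \<Rightarrow> (nat list \<Rightarrow> complex) \<Rightarrow> nat \<Rightarrow> nat \<Rightarrow> complex" where
  "Rv d n \<rho> v a a' = (\<Sum>i\<in>idx d n. \<Sum>j\<in>idx d n. cnj (v i) * \<rho> (a#i) (a'#j) * v j)"

lemma finite_idx: "finite (idx d n)"
proof -
  have "idx d n = {xs. set xs \<subseteq> {..<d} \<and> length xs = n}" unfolding idx_def by auto
  then show ?thesis using finite_lists_length_eq[of "{..<d}" n] by simp
qed

lemma idx_0: "idx d 0 = {[]}" unfolding idx_def by auto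

lemma idx_Suc: "idx d (Suc n) = (\<lambda>(a,l). a#l) ` ({..<d} \<times> idx d n)"
proof
  show "idx d (Suc n) \<subseteq> (\<lambda>(a,l). a#l) ` ({..<d} \<times> idx d n)"
  proof
    fix xs assume "xs \<in> idx d (Suc n)"
    then obtain a l where "xs = a # l" "a < d" "l \<in> idx d n"
      unfolding idx_def by (cases xs) auto
    then show "xs \<in> (\<lambda>(a,l). a#l) ` ({..<d} \<times> idx d n)" by force
  qed
  show "(\<lambda>(a,l). a#l) ` ({..<d} \<times> idx d n) \<subseteq> idx d (Suc n)"
    unfolding idx_def by auto
qed

lemma sum_idx_Suc: "(\<Sum>l\<in>idx d (Suc n). f l) = (\<Sum>a<d. \<Sum>i\<in>idx d n. f (a#i))"
proof -
  have inj: "inj_on (\<lambda>(a,l). a#l) ({..<d} \<times> idx d n)" by (auto simp: inj_on_def)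
  have "(\<Sum>l\<in>idx d (Suc n). f l) = (\<Sum>p\<in>{..<d} \<times> idx d n. f ((\<lambda>(a,l). a#l) p))"
    unfolding idx_Suc by (rule sum.reindex[OF inj, unfolded comp_def])
  also have "\<dots> = (\<Sum>a<d. \<Sum>i\<in>idx d n. f (a#i))"
    unfolding sum.cartesian_product by (intro sum.cong refl) auto
  finally show ?thesis .
qed

lemma swap_mid:
  "(\<Sum>a\<in>A. \<Sum>i\<in>I. \<Sum>a'\<in>B. \<Sum>j\<in>J. F a i a' j) = (\<Sum>a\<in>A. \<Sum>a'\<in>B. \<Sum>i\<in>I. \<Sum>j\<in>J. F a i a' j)"
  by (intro sum.cong refl) (rule sum.swap)

lemma Rv_psd:
  assumes \<rho>: "psd_on (idx d (Suc n)) \<rho>"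
  shows "psd_on {..<d} (Rv d n \<rho> v)"
  unfolding psd_on_qf
proof
  fix w
  have "qf (idx d (Suc n)) \<rho> (\<lambda>l. w (hd l) * v (tl l))
      = (\<Sum>a<d. \<Sum>i\<in>idx d n. \<Sum>a'<d. \<Sum>j\<in>idx d n. cnj (w a) * (cnj (v i) * \<rho> (a#i) (a'#j) * v j) * w a')"
    unfolding qf_def sum_idx_Suc
    by (intro sum.cong refl) (simp add: sum_idx_Suc mult_ac)
  also have "\<dots> = (\<Sum>a<d. \<Sum>a'<d. \<Sum>i\<in>idx d n. \<Sum>j\<in>idx d n. cnj (w a) * (cnj (v i) * \<rho> (a#i) (a'#j) * v j) * w a')"
    by (rule swap_mid)
  also have "\<dots> = qf {..<d} (Rv d n \<rho> v) w"
    unfolding qf_def Rv_def by (simp add: sum_distrib_left sum_distrib_right)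
  finally have eq: "qf {..<d} (Rv d n \<rho> v) w = qf (idx d (Suc n)) \<rho> (\<lambda>l. w (hd l) * v (tl l))" by simp
  show "Im (qf {..<d} (Rv d n \<rho> v) w) = 0 \<and> 0 \<le> Re (qf {..<d} (Rv d n \<rho> v) w)"
    unfolding eq using psd_onD[OF \<rho>] by simp
qed

lemma contr_qf:
  "qf (idx d n) (contr d \<rho> M) v = (\<Sum>a<d. \<Sum>a'<d. Rv d n \<rho> v a a' * M a' a)"
proof -
  have "qf (idx d n) (contr d \<rho> M) v
      = (\<Sum>i\<in>idx d n. \<Sum>j\<in>idx d n. \<Sum>a<d. \<Sum>a'<d. cnj (v i) * \<rho> (a#i) (a'#j) * v j * M a' a)"
    unfolding qf_def contr_def by (simp add: sum_distrib_left sum_distrib_right mult_ac)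
  also have "\<dots> = (\<Sum>i\<in>idx d n. \<Sum>a<d. \<Sum>j\<in>idx d n. \<Sum>a'<d. cnj (v i) * \<rho> (a#i) (a'#j) * v j * M a' a)"
    by (intro sum.cong refl) (rule sum.swap)
  also have "\<dots> = (\<Sum>a<d. \<Sum>i\<in>idx d n. \<Sum>j\<in>idx d n. \<Sum>a'<d. cnj (v i) * \<rho> (a#i) (a'#j) * v j * M a' a)"
    by (rule sum.swap)
  also have "\<dots> = (\<Sum>a<d. \<Sum>i\<in>idx d n. \<Sum>a'<d. \<Sum>j\<in>idx d n. cnj (v i) * \<rho> (a#i) (a'#j) * v j * M a' a)"
    by (intro sum.cong refl) (rule sum.swap)
  also have "\<dots> = (\<Sum>a<d. \<Sum>a'<d. \<Sum>i\<in>idx d n. \<Sum>j\<in>idx d n. cnj (v i) * \<rho> (a#i) (a'#j) * v j * M a' a)"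
    by (rule swap_mid)
  also have "\<dots> = (\<Sum>a<d. \<Sum>a'<d. Rv d n \<rho> v a a' * M a' a)"
    unfolding Rv_def by (simp add: sum_distrib_right)
  finally show ?thesis .
qed

lemma contr_psd:
  assumes \<rho>: "psd_on (idx d (Suc n)) \<rho>" and M: "psd_on {..<d} M"
  shows "psd_on (idx d n) (contr d \<rho> M)"
  unfolding psd_on_qf contr_qf
  using psd_trace_prod[OF _ Rv_psd[OF \<rho>] M] by simp

lemma Rv_delta:
  assumes "i \<in> idx d n"
  shows "Rv d n \<rho> (\<lambda>k. if k = i then 1 else 0) a a' = \<rho> (a#i) (a'#i)"
proof -
  have "Rv d n \<rho> (\<lambda>k. if k = i then 1 else 0) a a'
      = (\<Sum>i'\<in>idx d n. (if i' = i then 1 else 0) * (\<Sum>j\<in>idx d n. \<rho> (a#i') (a'#j) * (if j = i then 1 else 0)))"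
    unfolding Rv_def by (intro sum.cong refl) (auto simp: sum_distrib_left)
  also have "\<dots> = \<rho> (a#i) (a'#i)"
    using assms by (simp add: sum_delta_mult sum_delta_mult' finite_idx)
  finally show ?thesis .
qed

lemma contr_trace_nonneg:
  assumes \<rho>: "psd_on (idx d (Suc n)) \<rho>" and M: "psd_on {..<d} M"
  shows "0 \<le> Re (\<Sum>i\<in>idx d n. contr d \<rho> M i i)"
proof -
  have "(\<Sum>i\<in>idx d n. contr d \<rho> M i i)
      = (\<Sum>i\<in>idx d n. \<Sum>a<d. \<Sum>a'<d. Rv d n \<rho> (\<lambda>k. if k = i then 1 else 0) a a' * M a' a)"
    unfolding contr_def by (intro sum.cong refl) (simp add: Rv_delta)
  then show ?thesis
    using psd_trace_prod(2)[OF _ Rv_psd[OF \<rho>] M] by (simp add: Re_sum sum_nonneg)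
qed

lemma contr_lin:
  "contr d \<rho> (\<lambda>x y. c * A x y - B x y) i j = c * contr d \<rho> A i j - contr d \<rho> B i j"
  unfolding contr_def by (simp add: algebra_simps sum_subtractf sum_distrib_left)

lemma contr_id_trace:
  "(\<Sum>i\<in>idx d n. contr d \<rho> id_op i i) = (\<Sum>l\<in>idx d (Suc n). \<rho> l l)"
proof -
  have "(\<Sum>i\<in>idx d n. contr d \<rho> id_op i i) = (\<Sum>i\<in>idx d n. \<Sum>a<d. \<rho> (a#i) (a#i))"
    unfolding contr_def id_op_def by (intro sum.cong refl) (simp add: sum_delta_mult)
  also have "\<dots> = (\<Sum>l\<in>idx d (Suc n). \<rho> l l)"
    unfolding sum_idx_Suc by (rule sum.swap)
  finally show ?thesis .
qed

definition bt :: "real \<Rightarrow> nat \<Rightarrow> real \<Rightarrow> real" where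
  "bt \<delta> n t = (\<Sum>i\<le>n. if t \<le> real i then real (n choose i) * \<delta> ^ i * (1 - \<delta>) ^ (n - i) else 0)"

lemma bt_set: "(\<Sum>i\<in>{i. i \<le> n \<and> t \<le> real i}. real (n choose i) * \<delta> ^ i * (1 - \<delta>) ^ (n - i)) = bt \<delta> n t"
proof -
  have "{i. i \<le> n \<and> t \<le> real i} = {i \<in> {..n}. t \<le> real i}" by auto
  then show ?thesis unfolding bt_def by (simp only:) (rule sum.inter_filter, simp)
qed

lemma bt_0: "bt \<delta> 0 t = (if t \<le> 0 then 1 else 0)"
  unfolding bt_def by simp

lemma bt_mono:
  assumes "0 \<le> \<delta>" "\<delta> \<le> 1" "s \<le> t"
  shows "bt \<delta> n t \<le> bt \<delta> n s"
  unfolding bt_def using assms by (intro sum_mono) auto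

lemma bt_Suc:
  "bt \<delta> (Suc n) t = \<delta> * bt \<delta> n (t - 1) + (1 - \<delta>) * bt \<delta> n t"
proof -
  define h where "h = (\<lambda>k. if t \<le> real k then real (n choose k) * \<delta> ^ k * (1 - \<delta>) ^ (n - k) else 0)"
  define g where "g = (\<lambda>k. if t \<le> real k then real (Suc n choose k) * \<delta> ^ k * (1 - \<delta>) ^ (Suc n - k) else 0)"
  have "bt \<delta> (Suc n) t = g 0 + (\<Sum>i\<le>n. g (Suc i))"
    unfolding bt_def g_def by (rule sum.atMost_Suc_shift)
  also have "(\<Sum>i\<le>n. g (Suc i)) = (\<Sum>i\<le>n. \<delta> * (if t - 1 \<le> real i then real (n choose i) * \<delta> ^ i * (1 - \<delta>) ^ (n - i) else 0)
        + (1 - \<delta>) * h (Suc i))"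
  proof (rule sum.cong[OF refl])
    fix i assume i: "i \<in> {..n}"
    have e1: "(1 - \<delta>) ^ (Suc n - Suc i) = (1 - \<delta>) ^ (n - i)" by simp
    have e2: "real (n choose Suc i) * (1 - \<delta>) ^ (n - i) = (1 - \<delta>) * (real (n choose Suc i) * (1 - \<delta>) ^ (n - Suc i))"
    proof (cases "i = n")
      case True then show ?thesis by simp
    next
      case False
      then have "n - i = Suc (n - Suc i)" using i by auto
      then show ?thesis by (simp add: mult_ac)
    qed
    have key: "real (Suc n choose Suc i) * \<delta> ^ Suc i * (1 - \<delta>) ^ (n - i)
       = \<delta> * (real (n choose i) * \<delta> ^ i * (1 - \<delta>) ^ (n - i))
         + (1 - \<delta>) * (real (n choose Suc i) * \<delta> ^ Suc i * (1 - \<delta>) ^ (n - Suc i))"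
    proof -
      have "real (Suc n choose Suc i) * \<delta> ^ Suc i * (1 - \<delta>) ^ (n - i)
          = (real (n choose i) + real (n choose Suc i)) * \<delta> ^ Suc i * (1 - \<delta>) ^ (n - i)"
        by (simp add: binomial_Suc_Suc)
      also have "\<dots> = \<delta> * (real (n choose i) * \<delta> ^ i * (1 - \<delta>) ^ (n - i))
          + \<delta> ^ Suc i * (real (n choose Suc i) * (1 - \<delta>) ^ (n - i))"
        by (simp add: algebra_simps)
      also have "\<dots> = \<delta> * (real (n choose i) * \<delta> ^ i * (1 - \<delta>) ^ (n - i))
          + \<delta> ^ Suc i * ((1 - \<delta>) * (real (n choose Suc i) * (1 - \<delta>) ^ (n - Suc i)))"
        by (simp only: e2)
      finally show ?thesis by (simp add: mult_ac)
    qed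
    show "g (Suc i) = \<delta> * (if t - 1 \<le> real i then real (n choose i) * \<delta> ^ i * (1 - \<delta>) ^ (n - i) else 0)
        + (1 - \<delta>) * h (Suc i)"
    proof (cases "t \<le> real (Suc i)")
      case True
      then have "t - 1 \<le> real i" by simp
      then show ?thesis unfolding g_def h_def e1 using True key by simp
    next
      case False
      then have "\<not> t - 1 \<le> real i" by simp
      then show ?thesis unfolding g_def h_def using False by simp
    qed
  qed
  also have "\<dots> = \<delta> * bt \<delta> n (t - 1) + (1 - \<delta>) * (\<Sum>i\<le>n. h (Suc i))"
    unfolding bt_def by (simp add: sum.distrib sum_distrib_left)
  also have "g 0 = (1 - \<delta>) * h 0" unfolding g_def h_def by simp
  also have "(1 - \<delta>) * h 0 + (\<delta> * bt \<delta> n (t - 1) + (1 - \<delta>) * (\<Sum>i\<le>n. h (Suc i)))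
      = \<delta> * bt \<delta> n (t - 1) + (1 - \<delta>) * (h 0 + (\<Sum>i\<le>n. h (Suc i)))" by (simp add: algebra_simps)
  also have "h 0 + (\<Sum>i\<le>n. h (Suc i)) = (\<Sum>i\<le>Suc n. h i)" by (rule sum.atMost_Suc_shift[symmetric])
  also have "\<dots> = bt \<delta> n t" unfolding h_def bt_def by simp
  finally show ?thesis .
qed

lemma swap4:
  "(\<Sum>a\<in>A. \<Sum>i\<in>I. \<Sum>a'\<in>B. \<Sum>j\<in>J. F a i a' j) = (\<Sum>i\<in>I. \<Sum>j\<in>J. \<Sum>a\<in>A. \<Sum>a'\<in>B. F a i a' j)"
proof -
  have "(\<Sum>a\<in>A. \<Sum>i\<in>I. \<Sum>a'\<in>B. \<Sum>j\<in>J. F a i a' j) = (\<Sum>i\<in>I. \<Sum>a\<in>A. \<Sum>a'\<in>B. \<Sum>j\<in>J. F a i a' j)"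
    by (rule sum.swap)
  also have "\<dots> = (\<Sum>i\<in>I. \<Sum>a\<in>A. \<Sum>j\<in>J. \<Sum>a'\<in>B. F a i a' j)"
    by (intro sum.cong refl) (rule sum.swap)
  also have "\<dots> = (\<Sum>i\<in>I. \<Sum>j\<in>J. \<Sum>a\<in>A. \<Sum>a'\<in>B. F a i a' j)"
    by (intro sum.cong refl) (rule sum.swap)
  finally show ?thesis .
qed

lemma outcome_prob_Cons:
  "outcome_prob d (Suc n) \<rho> P (b#y) = outcome_prob d n (contr d \<rho> (outcome_op P b)) P y"
proof -
  have "(\<Sum>l\<in>idx d (Suc n). \<Sum>m\<in>idx d (Suc n). \<rho> l m * (\<Prod>k<Suc n. outcome_op P ((b#y) ! k) (m ! k) (l ! k)))
     = (\<Sum>a<d. \<Sum>i\<in>idx d n. \<Sum>a'<d. \<Sum>j\<in>idx d n. \<rho> (a#i) (a'#j) * (outcome_op P b a' a * (\<Prod>k<n. outcome_op P (y ! k) (j ! k) (i ! k))))"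
    unfolding sum_idx_Suc prod.lessThan_Suc_shift by simp
  also have "\<dots> = (\<Sum>i\<in>idx d n. \<Sum>j\<in>idx d n. \<Sum>a<d. \<Sum>a'<d. \<rho> (a#i) (a'#j) * (outcome_op P b a' a * (\<Prod>k<n. outcome_op P (y ! k) (j ! k) (i ! k))))"
    by (rule swap4)
  also have "\<dots> = (\<Sum>i\<in>idx d n. \<Sum>j\<in>idx d n. contr d \<rho> (outcome_op P b) i j * (\<Prod>k<n. outcome_op P (y ! k) (j ! k) (i ! k)))"
    unfolding contr_def sum_distrib_right by (simp add: mult.assoc)
  finally show ?thesis unfolding outcome_prob_def by simp
qed

lemma finite_strings: "finite (outcome_strings n)"
proof -
  have "outcome_strings n = {xs. set xs \<subseteq> (UNIV :: bool set) \<and> length xs = n}"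
    unfolding outcome_strings_def by auto
  then show ?thesis using finite_lists_length_eq[of "UNIV :: bool set" n] by simp
qed

lemma strings_split:
  "{x \<in> outcome_strings (Suc n). t \<le> real (num_P x)}
   = (Cons True) ` {y \<in> outcome_strings n. t - 1 \<le> real (num_P y)}
     \<union> (Cons False) ` {y \<in> outcome_strings n. t \<le> real (num_P y)}"
proof
  show "{x \<in> outcome_strings (Suc n). t \<le> real (num_P x)}
     \<subseteq> (Cons True) ` {y \<in> outcome_strings n. t - 1 \<le> real (num_P y)}
     \<union> (Cons False) ` {y \<in> outcome_strings n. t \<le> real (num_P y)}"
  proof
    fix x assume x: "x \<in> {x \<in> outcome_strings (Suc n). t \<le> real (num_P x)}"
    then obtain b y where xy: "x = b # y" and y: "length y = n"
      unfolding outcome_strings_def by (auto simp: length_Suc_conv)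
    show "x \<in> (Cons True) ` {y \<in> outcome_strings n. t - 1 \<le> real (num_P y)}
     \<union> (Cons False) ` {y \<in> outcome_strings n. t \<le> real (num_P y)}"
    proof (cases b)
      case True
      then show ?thesis using x xy y unfolding outcome_strings_def num_P_def by auto
    next
      case False
      then show ?thesis using x xy y unfolding outcome_strings_def num_P_def by auto
    qed
  qed
  show "(Cons True) ` {y \<in> outcome_strings n. t - 1 \<le> real (num_P y)}
     \<union> (Cons False) ` {y \<in> outcome_strings n. t \<le> real (num_P y)}
     \<subseteq> {x \<in> outcome_strings (Suc n). t \<le> real (num_P x)}"
    unfolding outcome_strings_def num_P_def by auto
qed

lemma main_ind:
  assumes P1: "psd_on {..<d} P" and P2: "psd_on {..<d} (\<lambda>i j. id_op i j - P i j)"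
    and D: "psd_on {..<d} (\<lambda>i j. complex_of_real \<delta> * id_op i j - P i j)"
    and d0: "0 \<le> \<delta>" and d1: "\<delta> \<le> 1"
  shows "psd_on (idx d n) \<rho> \<Longrightarrow>
    (\<Sum>x\<in>{x \<in> outcome_strings n. t \<le> real (num_P x)}. outcome_prob d n \<rho> P x)
      \<le> Re (\<Sum>l\<in>idx d n. \<rho> l l) * bt \<delta> n t"
proof (induction n arbitrary: \<rho> t)
  case 0
  have s0: "outcome_strings 0 = {[]}" unfolding outcome_strings_def by auto
  have op0: "outcome_prob d 0 \<rho> P [] = Re (\<rho> [] [])" unfolding outcome_prob_def idx_0 by simp
  show ?case
  proof (cases "t \<le> 0")
    case True
    then have "{x \<in> outcome_strings 0. t \<le> real (num_P x)} = {[]}" unfolding s0 num_P_def by auto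
    then show ?thesis using True by (simp add: op0 bt_0 idx_0)
  next
    case False
    have e: "{x \<in> outcome_strings 0. t \<le> real (num_P x)} = {}" using False unfolding s0 num_P_def by auto
    show ?thesis unfolding e using False by (simp add: bt_0)
  qed
next
  case (Suc n)
  have \<rho>: "psd_on (idx d (Suc n)) \<rho>" by fact
  define \<sigma>T where "\<sigma>T = contr d \<rho> P"
  define \<sigma>F where "\<sigma>F = contr d \<rho> (outcome_op P False)"
  have oF: "outcome_op P False = (\<lambda>i j. 1 * id_op i j - P i j)" unfolding outcome_op_def by simp
  have oT: "outcome_op P True = P" unfolding outcome_op_def by simp
  have psdT: "psd_on (idx d n) \<sigma>T" unfolding \<sigma>T_def by (rule contr_psd[OF \<rho> P1])
  have psdF: "psd_on (idx d n) \<sigma>F" unfolding \<sigma>F_def oF using contr_psd[OF \<rho> P2] by simp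
  define T where "T = Re (\<Sum>l\<in>idx d (Suc n). \<rho> l l)"
  define x where "x = Re (\<Sum>i\<in>idx d n. \<sigma>T i i)"
  have trF: "Re (\<Sum>i\<in>idx d n. \<sigma>F i i) = T - x"
    unfolding \<sigma>F_def oF contr_lin T_def x_def \<sigma>T_def
    by (simp add: sum_subtractf contr_id_trace)
  have "0 \<le> Re (\<Sum>i\<in>idx d n. contr d \<rho> (\<lambda>i j. complex_of_real \<delta> * id_op i j - P i j) i i)"
    by (rule contr_trace_nonneg[OF \<rho> D])
  also have "Re (\<Sum>i\<in>idx d n. contr d \<rho> (\<lambda>i j. complex_of_real \<delta> * id_op i j - P i j) i i) = \<delta> * T - x"
    unfolding contr_lin T_def x_def \<sigma>T_def
    by (simp add: sum_subtractf contr_id_trace sum_distrib_left[symmetric])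
  finally have xT: "x \<le> \<delta> * T" by simp
  define E1 where "E1 = {y \<in> outcome_strings n. t - 1 \<le> real (num_P y)}"
  define E0 where "E0 = {y \<in> outcome_strings n. t \<le> real (num_P y)}"
  have fin1: "finite E1" and fin0: "finite E0" unfolding E1_def E0_def using finite_strings by auto
  have "(\<Sum>x\<in>{x \<in> outcome_strings (Suc n). t \<le> real (num_P x)}. outcome_prob d (Suc n) \<rho> P x)
      = (\<Sum>x\<in>Cons True ` E1. outcome_prob d (Suc n) \<rho> P x) + (\<Sum>x\<in>Cons False ` E0. outcome_prob d (Suc n) \<rho> P x)"
    unfolding strings_split E1_def[symmetric] E0_def[symmetric]
    by (rule sum.union_disjoint) (use fin1 fin0 in auto)
  also have "\<dots> = (\<Sum>y\<in>E1. outcome_prob d n \<sigma>T P y) + (\<Sum>y\<in>E0. outcome_prob d n \<sigma>F P y)"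
    by (simp add: sum.reindex outcome_prob_Cons oT \<sigma>T_def \<sigma>F_def)
  also have "\<dots> \<le> Re (\<Sum>i\<in>idx d n. \<sigma>T i i) * bt \<delta> n (t - 1) + Re (\<Sum>i\<in>idx d n. \<sigma>F i i) * bt \<delta> n t"
    unfolding E1_def E0_def by (intro add_mono Suc.IH psdT psdF)
  also have "\<dots> = x * bt \<delta> n (t - 1) + (T - x) * bt \<delta> n t" unfolding trF x_def ..
  also have "\<dots> = T * bt \<delta> n t + x * (bt \<delta> n (t - 1) - bt \<delta> n t)" by (simp add: algebra_simps)
  also have "\<dots> \<le> T * bt \<delta> n t + (\<delta> * T) * (bt \<delta> n (t - 1) - bt \<delta> n t)"
    using xT bt_mono[OF d0 d1, of "t - 1" t n] by (intro add_left_mono mult_right_mono) auto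
  also have "\<dots> = T * bt \<delta> (Suc n) t" unfolding bt_Suc by (simp add: algebra_simps)
  finally show ?case unfolding T_def .
qed

theorem lemma4:
  fixes d n :: nat and \<rho> :: "nat list \<Rightarrow> nat list \<Rightarrow> complex"
    and P :: "nat \<Rightarrow> nat \<Rightarrow> complex" and \<delta> c :: real
  assumes "d \<ge> 1" and "n \<ge> 1"
    and "density_op (idx d n) \<rho>"
    and "two_povm d P"
    and "op_norm d P \<le> \<delta>" and "\<delta> \<le> 1"
  shows "prob_event d n \<rho> P (\<lambda>x. real (num_P x) / real n \<ge> \<delta> + c)
    \<le> (\<Sum>i\<in>{i. i \<le> n \<and> real n * (\<delta> + c) \<le> real i}.
          real (n choose i) * \<delta> ^ i * (1 - \<delta>) ^ (n - i))"
proof -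
  have \<rho>: "psd_on (idx d n) \<rho>" and tr: "(\<Sum>i\<in>idx d n. \<rho> i i) = 1"
    using assms(3) unfolding density_op_def by auto
  have P1: "psd_on {..<d} P" and P2: "psd_on {..<d} (\<lambda>i j. id_op i j - P i j)"
    using assms(4) unfolding two_povm_def by auto
  have D: "psd_on {..<d} (\<lambda>i j. complex_of_real \<delta> * id_op i j - P i j)"
    by (rule psd_delta_minus[OF P1 assms(5)])
  have z: "0 \<in> {..<d}" using assms(1) by simp
  have "0 \<le> Re (complex_of_real \<delta> * id_op 0 0 - P 0 0)"
    using psd_diag(2)[OF D _ z] by simp
  moreover have "0 \<le> Re (P 0 0)" using psd_diag(2)[OF P1 _ z] by simp
  ultimately have d0: "0 \<le> \<delta>" by (simp add: id_op_def)
  have n0: "real n > 0" using assms(2) by simp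
  have set_eq: "{x \<in> outcome_strings n. \<delta> + c \<le> real (num_P x) / real n}
      = {x \<in> outcome_strings n. real n * (\<delta> + c) \<le> real (num_P x)}"
    using n0 by (auto simp: field_simps)
  have "prob_event d n \<rho> P (\<lambda>x. real (num_P x) / real n \<ge> \<delta> + c)
      = (\<Sum>x\<in>{x \<in> outcome_strings n. real n * (\<delta> + c) \<le> real (num_P x)}. outcome_prob d n \<rho> P x)"
    unfolding prob_event_def set_eq ..
  also have "\<dots> \<le> Re (\<Sum>l\<in>idx d n. \<rho> l l) * bt \<delta> n (real n * (\<delta> + c))"
    by (rule main_ind[OF P1 P2 D d0 assms(6) \<rho>])
  also have "\<dots> = (\<Sum>i\<in>{i. i \<le> n \<and> real n * (\<delta> + c) \<le> real i}.
          real (n choose i) * \<delta> ^ i * (1 - \<delta>) ^ (n - i))"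
    unfolding tr bt_set by simp
  finally show ?thesis .
qed

end
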